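(* Let $(Z_0,\dots,Z_H)$ be a process on an abstract state space with transitions $Z_{j+1}\mid Z_j\sim K_j(\cdot\mid Z_j)$ satisfying $\eta_{\chi^2}(K_j)\le\eta<1$ for all $j$, let $m\in\{0,\dots,H-1\}$, and let $\mathcal{T}$ be the schedule $t_i=\lfloor iH/(m+1)\rfloor$, $i=1,\dots,m$, with inspection outputs $Y_u=g_u(Z_u)$ for $u\in\mathcal{T}\cup\{H\}$. Let $\Delta^2\in(0,\infty)$ and $\epsilon\in(0,1/2)$. Then there exists a step $t^\star\in\{0,\dots,H-1\}$ with next inspection time $u^\star=\min\{u\in\mathcal{T}\cup\{H\}:u>t^\star\}$ such that, for any two hypotheses under which $Z_{t^\star}$ has distributions $P^{(0)}\ll P^{(1)}$ with $\chi^2(P^{(0)}\|P^{(1)})=\Delta^2$ and the kernels $K_j$, $j\ge t^\star$, and $g_{u^\star}$ are common to both, any test based on $n$ i.i.d. samples of $Y_{u^\star}$ with total testing error at most $\epsilon$ requires $$n\ge\frac{(1-\epsilon)^2}{\eta^{\lceil H/(m+1)\rceil}\Delta^2}.$$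
   Context: $\chi^2(P\|Q)=\int(dP/dQ-1)^2dQ$; for a Markov kernel $K$, $\eta_{\chi^2}(K)=\sup\{\chi^2(PK\|QK)/\chi^2(P\|Q):P\ll Q,\ 0<\chi^2(P\|Q)<\infty\}$ with $PK$ the pushforward. The total testing error of a test $\psi$ is $\mathbb{P}_{H_0}(\psi=1)+\mathbb{P}_{H_1}(\psi=0)$. The schedule $t_i=\lfloor iH/(m+1)\rfloor$ is the minimax-optimal (near-uniform) placement of $m$ inspections in $\{1,\dots,H-1\}$. *)

theory Defs
  imports "HOL-Probability.Probability"
begin

definition chi2 :: "'a measure \<Rightarrow> 'a measure \<Rightarrow> ennreal" where
  "chi2 P Q = (\<integral>\<^sup>+ x. ennreal ((enn2real (RN_deriv Q P x) - 1)\<^sup>2) \<partial>Q)"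

definition eta_chi2 :: "'a measure \<Rightarrow> ('a \<Rightarrow> 'a measure) \<Rightarrow> ennreal" where
  "eta_chi2 M K = Sup {chi2 (P \<bind> K) (Q \<bind> K) / chi2 P Q | P Q.
      P \<in> space (prob_algebra M) \<and> Q \<in> space (prob_algebra M) \<and>
      absolutely_continuous Q P \<and> 0 < chi2 P Q \<and> chi2 P Q < \<infinity>}"

text \<open>Distribution of Z_(t+k) when Z_t ~ P, propagating through K t, ..., K (t+k-1).\<close>
fun propagate :: "(nat \<Rightarrow> 'a \<Rightarrow> 'a measure) \<Rightarrow> 'a measure \<Rightarrow> nat \<Rightarrow> nat \<Rightarrow> 'a measure" where
  "propagate K P t 0 = P"
| "propagate K P t (Suc k) = propagate K P t k \<bind> K (t + k)"

definition schedule :: "nat \<Rightarrow> nat \<Rightarrow> nat set" where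
  "schedule H m = {nat \<lfloor>real i * real H / real (m + 1)\<rfloor> | i. i \<in> {1..m}}"

definition next_insp :: "nat \<Rightarrow> nat \<Rightarrow> nat \<Rightarrow> nat" where
  "next_insp H m t = Min {u \<in> schedule H m \<union> {H}. t < u}"

definition total_error :: "nat \<Rightarrow> 'b measure \<Rightarrow> 'b measure \<Rightarrow> ((nat \<Rightarrow> 'b) \<Rightarrow> bool) \<Rightarrow> real" where
  "total_error n Q0 Q1 psi =
     measure (PiM {..<n} (\<lambda>_. Q0)) {x \<in> space (PiM {..<n} (\<lambda>_. Q0)). psi x}
   + measure (PiM {..<n} (\<lambda>_. Q1)) {x \<in> space (PiM {..<n} (\<lambda>_. Q1)). \<not> psi x}"

end

theory Submission
  imports Defs
begin

lemma PiM_density: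
  fixes Q :: "'a measure" and f :: "'a \<Rightarrow> ennreal"
  assumes I: "finite I" and Q: "prob_space Q" and f[measurable]: "f \<in> borel_measurable Q"
    and P: "prob_space (density Q f)"
  shows "PiM I (\<lambda>_. density Q f) = density (PiM I (\<lambda>_. Q)) (\<lambda>x. \<Prod>i\<in>I. f (x i))"
proof -
  interpret PQ: product_sigma_finite "\<lambda>_. Q"
    unfolding product_sigma_finite_def using prob_space_imp_sigma_finite[OF Q] by blast
  interpret PP: product_sigma_finite "\<lambda>_. density Q f"
    unfolding product_sigma_finite_def using prob_space_imp_sigma_finite[OF P] by blast
  have "density (PiM I (\<lambda>_. Q)) (\<lambda>x. \<Prod>i\<in>I. f (x i)) = PiM I (\<lambda>_. density Q f)"
  proof (rule PP.PiM_eqI[OF I])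
    show "sets (density (PiM I (\<lambda>_. Q)) (\<lambda>x. \<Prod>i\<in>I. f (x i))) = sets (PiM I (\<lambda>_. density Q f))"
      unfolding sets_density by (rule sets_PiM_cong) simp_all
  next
    fix A assume A: "\<And>i. i \<in> I \<Longrightarrow> A i \<in> sets (density Q f)"
    then have A': "\<And>i. i \<in> I \<Longrightarrow> A i \<in> sets Q" by simp
    have PE: "Pi\<^sub>E I A \<in> sets (PiM I (\<lambda>_. Q))"
      using A' I by (intro sets_PiM_I_finite) auto
    have "emeasure (density (PiM I (\<lambda>_. Q)) (\<lambda>x. \<Prod>i\<in>I. f (x i))) (Pi\<^sub>E I A)
        = (\<integral>\<^sup>+x. (\<Prod>i\<in>I. f (x i)) * indicator (Pi\<^sub>E I A) x \<partial>PiM I (\<lambda>_. Q))"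
      using PE by (simp add: emeasure_density)
    also have "\<dots> = (\<integral>\<^sup>+x. (\<Prod>i\<in>I. f (x i) * indicator (A i) (x i)) \<partial>PiM I (\<lambda>_. Q))"
    proof (rule nn_integral_cong)
      fix x assume x: "x \<in> space (PiM I (\<lambda>_. Q))"
      then have "x \<in> extensional I" by (simp add: space_PiM PiE_def)
      then have "indicator (Pi\<^sub>E I A) x = (\<Prod>i\<in>I. indicator (A i) (x i) :: ennreal)"
        using I by (auto simp: indicator_def PiE_def Pi_def prod_ennreal intro: prod_zero)
      then show "(\<Prod>i\<in>I. f (x i)) * indicator (Pi\<^sub>E I A) x = (\<Prod>i\<in>I. f (x i) * indicator (A i) (x i))"
        by (simp add: prod.distrib)
    qed
    also have "\<dots> = (\<Prod>i\<in>I. \<integral>\<^sup>+x. f x * indicator (A i) x \<partial>Q)"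
      using A' I by (intro PQ.product_nn_integral_prod) auto
    also have "\<dots> = (\<Prod>i\<in>I. emeasure (density Q f) (A i))"
      using A' by (intro prod.cong refl) (simp add: emeasure_density)
    finally show "emeasure (density (PiM I (\<lambda>_. Q)) (\<lambda>x. \<Prod>i\<in>I. f (x i))) (Pi\<^sub>E I A) = (\<Prod>i\<in>I. emeasure (density Q f) (A i))" .
  qed
  then show ?thesis by simp
qed

lemma RN_density_real:
  assumes P: "P \<in> space (prob_algebra M)" and Q: "Q \<in> space (prob_algebra M)"
    and ac: "absolutely_continuous Q P"
  shows "P = density Q (\<lambda>x. ennreal (enn2real (RN_deriv Q P x)))"
    and "AE x in Q. RN_deriv Q P x = ennreal (enn2real (RN_deriv Q P x))"
proof -
  interpret Q: prob_space Q using Q by (simp add: space_prob_algebra)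
  interpret P: prob_space P using P by (simp add: space_prob_algebra)
  have sets: "sets P = sets Q" using P Q by (simp add: space_prob_algebra)
  have fin: "AE x in Q. RN_deriv Q P x \<noteq> \<infinity>"
    by (rule Q.RN_deriv_finite[OF _ ac sets]) (simp add: P.sigma_finite_measure)
  show ae: "AE x in Q. RN_deriv Q P x = ennreal (enn2real (RN_deriv Q P x))"
    using fin by eventually_elim (simp add: less_top)
  have "P = density Q (RN_deriv Q P)" using Q.density_RN_deriv[OF ac sets] by simp
  also have "\<dots> = density Q (\<lambda>x. ennreal (enn2real (RN_deriv Q P x)))"
    by (rule density_cong) (use ae in auto)
  finally show "P = density Q (\<lambda>x. ennreal (enn2real (RN_deriv Q P x)))" .
qed

lemma chi2_real:
  assumes P: "P \<in> space (prob_algebra M)" and Q: "Q \<in> space (prob_algebra M)"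
    and ac: "absolutely_continuous Q P" and c: "chi2 P Q = ennreal c" and c0: "0 \<le> c"
  defines "fr \<equiv> (\<lambda>x. enn2real (RN_deriv Q P x))"
  shows "integrable Q fr" "integral\<^sup>L Q fr = 1"
    "integrable Q (\<lambda>x. (fr x)\<^sup>2)" "integral\<^sup>L Q (\<lambda>x. (fr x)\<^sup>2) = 1 + c"
proof -
  interpret Q: prob_space Q using Q by (simp add: space_prob_algebra)
  interpret P: prob_space P using P by (simp add: space_prob_algebra)
  have dens: "P = density Q (\<lambda>x. ennreal (fr x))"
    unfolding fr_def by (rule RN_density_real[OF P Q ac])
  have [measurable]: "fr \<in> borel_measurable Q" unfolding fr_def by measurable
  have sPQ: "sets P = sets Q" using P Q by (simp add: space_prob_algebra)
  have spPQ: "space P = space Q" using sets_eq_imp_space_eq[OF sPQ] .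
  have "(\<integral>\<^sup>+x. ennreal (fr x) \<partial>Q) = emeasure (density Q (\<lambda>x. ennreal (fr x))) (space Q)"
    by (simp add: emeasure_density)
  also have "\<dots> = emeasure P (space P)" using dens spPQ by metis
  also have "\<dots> = ennreal 1" using P.emeasure_space_1 by simp
  finally have n1: "(\<integral>\<^sup>+x. ennreal (fr x) \<partial>Q) = ennreal 1" .
  have fr0: "\<And>x. 0 \<le> fr x" by (simp add: fr_def)
  show i1: "integrable Q fr"
    by (rule integrableI_nn_integral_finite[OF _ _ n1]) (auto simp: fr_def)
  show e1: "integral\<^sup>L Q fr = 1"
    by (subst integral_eq_nn_integral) (auto simp: n1 fr0)
  have n2: "(\<integral>\<^sup>+x. ennreal ((fr x - 1)\<^sup>2) \<partial>Q) = ennreal c"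
    using c by (simp add: chi2_def fr_def)
  have i2: "integrable Q (\<lambda>x. (fr x - 1)\<^sup>2)"
    by (rule integrableI_nn_integral_finite[OF _ _ n2]) auto
  have e2: "integral\<^sup>L Q (\<lambda>x. (fr x - 1)\<^sup>2) = c"
    by (subst integral_eq_nn_integral) (auto simp: n2 c0)
  have eq: "(\<lambda>x. (fr x)\<^sup>2) = (\<lambda>x. (fr x - 1)\<^sup>2 + 2 * fr x - 1)"
    by (auto simp: power2_eq_square algebra_simps)
  show "integrable Q (\<lambda>x. (fr x)\<^sup>2)"
    unfolding eq using i1 i2 by auto
  show "integral\<^sup>L Q (\<lambda>x. (fr x)\<^sup>2) = 1 + c"
    unfolding eq using i1 i2 e1 e2 by (simp add: Q.prob_space)
qed

lemma chi2_zero: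
  assumes P: "P \<in> space (prob_algebra M)" and Q: "Q \<in> space (prob_algebra M)"
    and ac: "absolutely_continuous Q P" and c: "chi2 P Q = 0"
  shows "P = Q"
proof -
  interpret Q: prob_space Q using Q by (simp add: space_prob_algebra)
  have "AE x in Q. ennreal ((enn2real (RN_deriv Q P x) - 1)\<^sup>2) = 0"
    using c unfolding chi2_def by (subst (asm) nn_integral_0_iff_AE) auto
  then have ae: "AE x in Q. enn2real (RN_deriv Q P x) = 1" by eventually_elim auto
  have "P = density Q (\<lambda>x. ennreal (enn2real (RN_deriv Q P x)))"
    by (rule RN_density_real[OF P Q ac])
  also have "\<dots> = density Q (\<lambda>_. 1)"
    by (rule density_cong) (use ae in auto)
  also have "\<dots> = Q" by (simp add: density_1)
  finally show ?thesis .
qed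

lemma chi2_self:
  assumes Q: "Q \<in> space (prob_algebra M)"
  shows "chi2 Q Q = 0"
proof -
  interpret Q: prob_space Q using Q by (simp add: space_prob_algebra)
  have "AE x in Q. (\<lambda>_. 1) x = RN_deriv Q Q x"
    by (rule Q.RN_deriv_unique) (auto simp: density_1)
  then have "AE x in Q. ennreal ((enn2real (RN_deriv Q Q x) - 1)\<^sup>2) = 0"
    by eventually_elim (metis diff_self enn2real_1 ennreal_0 power_zero_numeral)
  then show ?thesis unfolding chi2_def by (simp add: nn_integral_0_iff_AE)
qed

lemma ac_bind:
  assumes P: "P \<in> space (prob_algebra M)" and Q: "Q \<in> space (prob_algebra M)"
    and ac: "absolutely_continuous Q P" and K: "K \<in> M \<rightarrow>\<^sub>M prob_algebra M"
  shows "absolutely_continuous (Q \<bind> K) (P \<bind> K)"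
  unfolding absolutely_continuous_def
proof
  fix A assume "A \<in> null_sets (Q \<bind> K)"
  then have A: "A \<in> sets (Q \<bind> K)" and z: "emeasure (Q \<bind> K) A = 0" by auto
  have sQ: "sets (Q \<bind> K) = sets M" using Q K by (simp add: sets_bind' space_prob_algebra)
  have sP: "sets (P \<bind> K) = sets M" using P K by (simp add: sets_bind' space_prob_algebra)
  have sPQ: "sets P = sets Q" using P Q by (simp add: space_prob_algebra)
  have AM: "A \<in> sets M" using A sQ by simp
  have KA: "(\<lambda>x. emeasure (K x) A) \<in> borel_measurable M"
    using K AM by (metis measurable_emeasure_kernel measurable_prob_algebraD subprob_measurableD(2) measurable_emeasure_subprob_algebra)
  have "(\<integral>\<^sup>+x. emeasure (K x) A \<partial>Q) = 0"
    using z Q K AM by (simp add: emeasure_bind_prob_algebra)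
  then have "AE x in Q. emeasure (K x) A = 0"
    using KA Q by (subst (asm) nn_integral_0_iff_AE) (auto simp: space_prob_algebra cong: measurable_cong_sets)
  then have "AE x in P. emeasure (K x) A = 0"
    by (rule absolutely_continuous_AE[OF sPQ ac])
  then have "(\<integral>\<^sup>+x. emeasure (K x) A \<partial>P) = 0"
    by (subst nn_integral_cong_AE[where v="\<lambda>_. 0"]) auto
  then show "A \<in> null_sets (P \<bind> K)"
    using P K AM sP by (simp add: emeasure_bind_prob_algebra null_sets_def)
qed

lemma key_ineq:
  fixes u b q s :: real
  assumes b: "b = 0 \<or> b = 1" and s: "0 < s"
  shows "u * b \<le> (1 + s/2 - s*q) * b + (q - 1/s) * u + 1/(2* s) * u\<^sup>2 + (- q + 1/(2* s) + s*q\<^sup>2/2)"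
proof -
  have e: "(1 + s/2 - s*q) * b + (q - 1/s) * u + 1/(2* s) * u\<^sup>2 + (- q + 1/(2* s) + s*q\<^sup>2/2) - u * b
     = (u - 1 - s*(b - q))\<^sup>2 / (2* s) + (s/2) * (b - b*b)"
    using s by (simp add: field_simps power2_eq_square) 
  have h2: "(s/2) * (b - b*b) = 0" using b by auto
  have h1: "0 \<le> (u - 1 - s*(b - q))\<^sup>2 / (2* s)" using s by simp
  show ?thesis using e h1 h2 by linarith
qed

lemma qq: "q * (1 - q) \<le> (1/4::real)"
proof -
  have "0 \<le> (q - 1/2)^2" by simp
  then show ?thesis by (simp add: power2_eq_square algebra_simps)
qed

lemma fin_arith:
  fixes p q s a X :: real
  assumes pb: "p \<le> (1 + s/2 - s*q) * q + (q - 1/s) + 1/(2* s) * X + (- q + 1/(2* s) + s*q\<^sup>2/2)"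
    and err: "1 - p + q \<le> 1 - a" and s: "s = 4 * a" and a: "0 < a"
  shows "4 * a * a \<le> X - 1"
proof -
  have s0: "s \<noteq> 0" using s a by simp
  have "(1 + s/2 - s*q) * q + (q - 1/s) + 1/(2* s) * X + (- q + 1/(2* s) + s*q\<^sup>2/2)
     = q + (s/2) * (q * (1 - q)) + (X - 1) / (2* s)"
    using s0 by (simp add: field_simps power2_eq_square)
  then have "p \<le> q + (s/2) * (q * (1 - q)) + (X - 1) / (2* s)"
    using pb by linarith
  also have "\<dots> \<le> q + (s/2) * (1/4) + (X - 1) / (2* s)"
    using qq[of q] s a by (intro add_mono mult_left_mono) auto
  finally have "a \<le> a/2 + (X - 1) / (8*a)" using err s by (simp add: field_simps)
  then have "a/2 \<le> (X - 1) / (8*a)" by linarith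
  then show ?thesis using a by (simp add: field_simps)
qed
lemma test_bound:
  fixes P Q :: "'a measure" and psi :: "(nat \<Rightarrow> 'a) \<Rightarrow> bool"
  assumes P: "P \<in> space (prob_algebra M)" and Q: "Q \<in> space (prob_algebra M)"
    and ac: "absolutely_continuous Q P" and c: "chi2 P Q = ennreal c" and c0: "0 \<le> c"
    and psi: "psi \<in> PiM {..<n} (\<lambda>_. M) \<rightarrow>\<^sub>M count_space UNIV"
    and err: "measure (PiM {..<n} (\<lambda>_. P)) {x \<in> space (PiM {..<n} (\<lambda>_. P)). psi x}
            + measure (PiM {..<n} (\<lambda>_. Q)) {x \<in> space (PiM {..<n} (\<lambda>_. Q)). \<not> psi x} \<le> \<epsilon>"
    and eps: "\<epsilon> < 1"
  shows "4 * (1 - \<epsilon>)\<^sup>2 \<le> (1 + c) ^ n - 1"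
proof -
  define I where "I = {..<n}"
  define fr where "fr = (\<lambda>x. enn2real (RN_deriv Q P x))"
  define F where "F = (\<lambda>x. \<Prod>i\<in>I. fr (x i))"
  interpret Q: prob_space Q using Q by (simp add: space_prob_algebra)
  interpret P: prob_space P using P by (simp add: space_prob_algebra)
  have sPQ: "sets P = sets Q" using P Q by (simp add: space_prob_algebra)
  have sQM: "sets Q = sets M" using Q by (simp add: space_prob_algebra)
  have finI: "finite I" by (simp add: I_def)
  interpret PQ: product_sigma_finite "\<lambda>_. Q"
    unfolding product_sigma_finite_def using Q.sigma_finite_measure by blast
  interpret Qn: prob_space "PiM I (\<lambda>_. Q)" by (rule prob_space_PiM) (rule Q.prob_space_axioms)
  interpret Pn: prob_space "PiM I (\<lambda>_. P)" by (rule prob_space_PiM) (rule P.prob_space_axioms)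
  have fr0: "\<And>x. 0 \<le> fr x" by (simp add: fr_def)
  have [measurable]: "fr \<in> borel_measurable Q" unfolding fr_def by measurable
  have Fm[measurable]: "F \<in> borel_measurable (PiM I (\<lambda>_. Q))"
    unfolding F_def using finI by measurable
  have F0: "\<And>x. 0 \<le> F x" by (simp add: F_def fr0 prod_nonneg)
  have dens: "P = density Q (\<lambda>x. ennreal (fr x))"
    unfolding fr_def by (rule RN_density_real[OF P Q ac])
  note cr0 = chi2_real[OF P Q ac c c0]
  have cr1: "integrable Q fr" using cr0(1) by (simp add: fr_def)
  have cr2: "integral\<^sup>L Q fr = 1" using cr0(2) by (simp add: fr_def)
  have cr3: "integrable Q (\<lambda>x. (fr x)\<^sup>2)" using cr0(3) by (simp add: fr_def)
  have cr4: "integral\<^sup>L Q (\<lambda>x. (fr x)\<^sup>2) = 1 + c" using cr0(4) by (simp add: fr_def)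
  note cr = cr1 cr2 cr3 cr4
  have Pn_eq: "PiM I (\<lambda>_. P) = density (PiM I (\<lambda>_. Q)) (\<lambda>x. ennreal (F x))"
  proof -
    have "PiM I (\<lambda>_. P) = PiM I (\<lambda>_. density Q (\<lambda>x. ennreal (fr x)))" using dens by simp
    also have "\<dots> = density (PiM I (\<lambda>_. Q)) (\<lambda>x. \<Prod>i\<in>I. ennreal (fr (x i)))"
      by (rule PiM_density[OF finI Q.prob_space_axioms]) (use dens P.prob_space_axioms in auto)
    also have "\<dots> = density (PiM I (\<lambda>_. Q)) (\<lambda>x. ennreal (F x))"
      by (simp add: F_def prod_ennreal fr0)
    finally show ?thesis .
  qed
  have iF: "integrable (PiM I (\<lambda>_. Q)) F"
    unfolding F_def using finI cr(1) by (intro PQ.product_integrable_prod) auto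
  have eF: "integral\<^sup>L (PiM I (\<lambda>_. Q)) F = 1"
    unfolding F_def using finI cr(1) by (subst PQ.product_integral_prod) (auto simp: cr(2))
  have F2: "(\<lambda>x. (F x)\<^sup>2) = (\<lambda>x. \<Prod>i\<in>I. (fr (x i))\<^sup>2)"
    by (simp add: F_def prod_power_distrib)
  have iF2: "integrable (PiM I (\<lambda>_. Q)) (\<lambda>x. (F x)\<^sup>2)"
    unfolding F2 using finI cr(3) by (intro PQ.product_integrable_prod) auto
  have eF2: "integral\<^sup>L (PiM I (\<lambda>_. Q)) (\<lambda>x. (F x)\<^sup>2) = (1 + c) ^ n"
    unfolding F2 using finI cr(3) by (subst PQ.product_integral_prod) (auto simp: cr(4) I_def)
  have sPn: "sets (PiM I (\<lambda>_. P)) = sets (PiM I (\<lambda>_. M))"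
    using sPQ sQM by (intro sets_PiM_cong) auto
  have sQn: "sets (PiM I (\<lambda>_. Q)) = sets (PiM I (\<lambda>_. M))"
    using sQM by (intro sets_PiM_cong) auto
  have spn: "space (PiM I (\<lambda>_. P)) = space (PiM I (\<lambda>_. Q))"
    using sPn sQn by (metis sets_eq_imp_space_eq)
  define B where "B = {x \<in> space (PiM I (\<lambda>_. Q)). \<not> psi x}"
  have psi': "psi \<in> PiM I (\<lambda>_. Q) \<rightarrow>\<^sub>M count_space UNIV"
    by (subst measurable_cong_sets[OF sQn refl]) (use psi in \<open>simp add: I_def\<close>)
  have BQ: "B \<in> sets (PiM I (\<lambda>_. Q))"
    unfolding B_def using psi' by measurable
  have BP: "B \<in> sets (PiM I (\<lambda>_. P))" using BQ sPn sQn by simp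
  define q where "q = measure (PiM I (\<lambda>_. Q)) B"
  define p where "p = measure (PiM I (\<lambda>_. P)) B"
  have compl: "{x \<in> space (PiM I (\<lambda>_. P)). psi x} = space (PiM I (\<lambda>_. P)) - B"
    unfolding B_def spn by auto
  have err': "1 - p + q \<le> \<epsilon>"
    using err unfolding compl I_def[symmetric] p_def q_def B_def[symmetric]
    using Pn.prob_compl[OF BP] by simp
  have p_int: "p = (\<integral>x. F x * indicator B x \<partial>PiM I (\<lambda>_. Q))"
  proof -
    have "p = (\<integral>x. indicator B x \<partial>PiM I (\<lambda>_. P))"
      using BP by (simp add: p_def Int_absorb2 sets.sets_into_space)
    also have "\<dots> = (\<integral>x. F x *\<^sub>R indicator B x \<partial>PiM I (\<lambda>_. Q))"
      unfolding Pn_eq by (rule integral_density) (use BQ F0 in auto)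
    finally show ?thesis by simp
  qed
  have q_int: "q = (\<integral>x. indicator B x \<partial>PiM I (\<lambda>_. Q))"
    using BQ by (simp add: q_def Int_absorb2 sets.sets_into_space)
  define a where "a = 1 - \<epsilon>"
  have a0: "0 < a" using eps by (simp add: a_def)
  define s where "s = 4 * a"
  have s0: "0 < s" using a0 by (simp add: s_def)
  have iB: "integrable (PiM I (\<lambda>_. Q)) (indicator B :: _ \<Rightarrow> real)"
    using BQ by (intro integrable_real_indicator) (auto simp: Qn.emeasure_eq_measure)
  have "p \<le> (\<integral>x. (1 + s/2 - s*q) * indicator B x + (q - 1/s) * F x + 1/(2* s) * (F x)\<^sup>2
              + (- q + 1/(2* s) + s*q\<^sup>2/2) \<partial>PiM I (\<lambda>_. Q))"
    unfolding p_int
  proof (rule integral_mono)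
    show "integrable (PiM I (\<lambda>_. Q)) (\<lambda>x. F x * indicator B x)"
      using integrable_mult_indicator[OF BQ iF] by (simp add: mult.commute)
    show "integrable (PiM I (\<lambda>_. Q)) (\<lambda>x. (1 + s/2 - s*q) * indicator B x + (q - 1/s) * F x + 1/(2* s) * (F x)\<^sup>2
              + (- q + 1/(2* s) + s*q\<^sup>2/2))"
      using iB iF iF2 by auto
    fix x show "F x * indicator B x \<le> (1 + s/2 - s*q) * indicator B x + (q - 1/s) * F x + 1/(2* s) * (F x)\<^sup>2
              + (- q + 1/(2* s) + s*q\<^sup>2/2)"
      by (rule key_ineq[OF _ s0]) (auto simp: indicator_def)
  qed
  also have "\<dots> = (1 + s/2 - s*q) * q + (q - 1/s) * 1 + 1/(2* s) * (1 + c) ^ n + (- q + 1/(2* s) + s*q\<^sup>2/2)"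
    using iB iF iF2 sets.sets_into_space[OF BQ]
    by (simp add: eF eF2 Qn.prob_space Int_absorb2 q_def)
  finally have pb: "p \<le> (1 + s/2 - s*q) * q + (q - 1/s) + 1/(2* s) * (1 + c) ^ n + (- q + 1/(2* s) + s*q\<^sup>2/2)"
    by simp
  have "4 * a * a \<le> (1 + c) ^ n - 1"
    by (rule fin_arith[OF pb _ s_def a0]) (use err' in \<open>simp add: a_def\<close>)
  moreover have "4 * a * a = 4 * (1 - \<epsilon>)\<^sup>2" by (simp add: a_def power2_eq_square)
  ultimately show ?thesis by linarith
qed

lemma test_bound_g:
  fixes P Q :: "'a measure" and psi :: "(nat \<Rightarrow> 'b) \<Rightarrow> bool" and N :: "'b measure"
  assumes P: "P \<in> space (prob_algebra M)" and Q: "Q \<in> space (prob_algebra M)"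
    and ac: "absolutely_continuous Q P" and c: "chi2 P Q = ennreal c" and c0: "0 \<le> c"
    and g[measurable]: "g \<in> M \<rightarrow>\<^sub>M N"
    and psi: "psi \<in> PiM {..<n} (\<lambda>_. N) \<rightarrow>\<^sub>M count_space UNIV"
    and err: "total_error n (distr P N g) (distr Q N g) psi \<le> \<epsilon>"
    and eps: "\<epsilon> < 1"
  shows "4 * (1 - \<epsilon>)\<^sup>2 \<le> (1 + c) ^ n - 1"
proof -
  define I where "I = {..<n}"
  interpret Q: prob_space Q using Q by (simp add: space_prob_algebra)
  interpret P: prob_space P using P by (simp add: space_prob_algebra)
  have sP: "sets P = sets M" using P by (simp add: space_prob_algebra)
  have sQ: "sets Q = sets M" using Q by (simp add: space_prob_algebra)
  have gP[measurable]: "g \<in> P \<rightarrow>\<^sub>M N" using g by (simp cong: measurable_cong_sets add: sP)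
  have gQ[measurable]: "g \<in> Q \<rightarrow>\<^sub>M N" using g by (simp cong: measurable_cong_sets add: sQ)
  obtain y where y: "y \<in> space N"
    using P.not_empty measurable_space[OF gP] by (metis ex_in_conv)
  define N' where "N' = return N y"
  have sN': "sets N' = sets N" by (simp add: N'_def)
  have pN': "prob_space N'" unfolding N'_def using y by (rule prob_space_return)
  have gP'[measurable]: "g \<in> P \<rightarrow>\<^sub>M N'" using gP by (simp cong: measurable_cong_sets add: sN')
  have gQ'[measurable]: "g \<in> Q \<rightarrow>\<^sub>M N'" using gQ by (simp cong: measurable_cong_sets add: sN')
  have dP: "distr P N g = distr P N' g" by (rule distr_cong) (auto simp: sN')
  have dQ: "distr Q N g = distr Q N' g" by (rule distr_cong) (auto simp: sN')
  have PiP: "PiM I (\<lambda>_. distr P N' g) = distr (PiM I (\<lambda>_. P)) (PiM I (\<lambda>_. N')) (compose I g)"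
    by (rule distr_PiM_finite_prob_space'[symmetric]) (auto simp: I_def P.prob_space_axioms pN')
  have PiQ: "PiM I (\<lambda>_. distr Q N' g) = distr (PiM I (\<lambda>_. Q)) (PiM I (\<lambda>_. N')) (compose I g)"
    by (rule distr_PiM_finite_prob_space'[symmetric]) (auto simp: I_def Q.prob_space_axioms pN')
  have sPiN': "sets (PiM I (\<lambda>_. N')) = sets (PiM I (\<lambda>_. N))"
    using sN' by (intro sets_PiM_cong) auto
  have psi': "psi \<in> PiM I (\<lambda>_. N') \<rightarrow>\<^sub>M count_space UNIV"
    by (subst measurable_cong_sets[OF sPiN' refl]) (use psi in \<open>simp add: I_def\<close>)
  have cmP[measurable]: "compose I g \<in> PiM I (\<lambda>_. P) \<rightarrow>\<^sub>M PiM I (\<lambda>_. N')"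
    unfolding compose_def by measurable
  have cmQ[measurable]: "compose I g \<in> PiM I (\<lambda>_. Q) \<rightarrow>\<^sub>M PiM I (\<lambda>_. N')"
    unfolding compose_def by measurable
  define psi2 where "psi2 = (\<lambda>x. psi (compose I g x))"
  have sPiP: "sets (PiM I (\<lambda>_. P)) = sets (PiM I (\<lambda>_. M))" using sP by (intro sets_PiM_cong) auto
  have psi2m: "psi2 \<in> PiM I (\<lambda>_. P) \<rightarrow>\<^sub>M count_space UNIV"
    unfolding psi2_def using measurable_comp[OF cmP psi'] by (simp add: comp_def)
  have psi2M: "psi2 \<in> PiM {..<n} (\<lambda>_. M) \<rightarrow>\<^sub>M count_space UNIV"
    using psi2m sPiP unfolding I_def by (subst (asm) measurable_cong_sets[OF sPiP[unfolded I_def] refl])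
  have S1: "{x \<in> space (PiM I (\<lambda>_. N')). psi x} \<in> sets (PiM I (\<lambda>_. N'))"
    using psi' by measurable
  have S2: "{x \<in> space (PiM I (\<lambda>_. N')). \<not> psi x} \<in> sets (PiM I (\<lambda>_. N'))"
    using psi' by measurable
  have spD: "space (PiM I (\<lambda>_. distr P N' g)) = space (PiM I (\<lambda>_. N'))"
    "space (PiM I (\<lambda>_. distr Q N' g)) = space (PiM I (\<lambda>_. N'))"
    by (simp_all add: PiP PiQ)
  have e1: "measure (PiM I (\<lambda>_. distr P N' g)) {x \<in> space (PiM I (\<lambda>_. distr P N' g)). psi x}
      = measure (PiM I (\<lambda>_. P)) {x \<in> space (PiM I (\<lambda>_. P)). psi2 x}"
    unfolding spD unfolding PiP using S1
    by (subst measure_distr[OF cmP]) (auto simp: psi2_def intro!: arg_cong2[where f=measure] dest: measurable_space[OF cmP])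
  have e2: "measure (PiM I (\<lambda>_. distr Q N' g)) {x \<in> space (PiM I (\<lambda>_. distr Q N' g)). \<not> psi x}
      = measure (PiM I (\<lambda>_. Q)) {x \<in> space (PiM I (\<lambda>_. Q)). \<not> psi2 x}"
    unfolding spD unfolding PiQ using S2
    by (subst measure_distr[OF cmQ]) (auto simp: psi2_def intro!: arg_cong2[where f=measure] dest: measurable_space[OF cmQ])
  have err2: "measure (PiM {..<n} (\<lambda>_. P)) {x \<in> space (PiM {..<n} (\<lambda>_. P)). psi2 x}
            + measure (PiM {..<n} (\<lambda>_. Q)) {x \<in> space (PiM {..<n} (\<lambda>_. Q)). \<not> psi2 x} \<le> \<epsilon>"
    using err e1 e2 unfolding total_error_def dP dQ I_def by simp
  show ?thesis by (rule test_bound[OF P Q ac c c0 psi2M err2 eps])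
qed

lemma final_arith:
  fixes c \<epsilon> :: real and n :: nat
  assumes h: "4 * (1 - \<epsilon>)\<^sup>2 \<le> (1 + c) ^ n - 1" and c0: "0 \<le> c" and eps: "0 < \<epsilon>" "\<epsilon> < 1"
  shows "(1 - \<epsilon>)\<^sup>2 \<le> real n * c"
proof (cases "real n * c \<le> 1")
  case False
  have "(1 - \<epsilon>)\<^sup>2 \<le> 1" using eps by (simp add: power_le_one)
  then show ?thesis using False by linarith
next
  case True
  have "(1 + c) ^ n \<le> exp c ^ n"
    using c0 by (intro power_mono) (auto simp: exp_ge_add_one_self)
  also have "\<dots> = exp (real n * c)" by (simp add: exp_of_nat_mult)
  also have "\<dots> \<le> 1 + real n * c + (real n * c)\<^sup>2"
    using True c0 by (intro exp_bound) auto
  also have "(real n * c)\<^sup>2 \<le> real n * c"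
    using True c0 by (simp add: power2_eq_square mult_left_le_one_le)
  finally have "(1 + c) ^ n \<le> 1 + real n * c + real n * c" by simp
  then have "(1 + c) ^ n - 1 \<le> 2 * (real n * c)" by linarith
  then show ?thesis using h c0 by (smt (verit) zero_le_power2)
qed

lemma bind_in:
  assumes "A \<in> space (prob_algebra M)" "K \<in> M \<rightarrow>\<^sub>M prob_algebra M"
  shows "A \<bind> K \<in> space (prob_algebra M)"
  using assms by (simp add: space_prob_algebra sets_bind' prob_space_bind')

lemma sdpi_step:
  assumes P: "P \<in> space (prob_algebra M)" and Q: "Q \<in> space (prob_algebra M)"
    and ac: "absolutely_continuous Q P" and fin: "chi2 P Q < \<top>"
    and K: "K \<in> M \<rightarrow>\<^sub>M prob_algebra M" and eta: "eta_chi2 M K \<le> ennreal \<eta>"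
  shows "chi2 (P \<bind> K) (Q \<bind> K) \<le> ennreal \<eta> * chi2 P Q"
proof (cases "chi2 P Q = 0")
  case True
  then have "P = Q" by (rule chi2_zero[OF P Q ac])
  then show ?thesis using chi2_self[OF bind_in[OF Q K]] by simp
next
  case False
  have mem: "chi2 (P \<bind> K) (Q \<bind> K) / chi2 P Q \<in> {chi2 (P \<bind> K) (Q \<bind> K) / chi2 P Q | P Q.
      P \<in> space (prob_algebra M) \<and> Q \<in> space (prob_algebra M) \<and>
      absolutely_continuous Q P \<and> 0 < chi2 P Q \<and> chi2 P Q < \<infinity>}"
    using P Q ac fin False by (auto simp: zero_less_iff_neq_zero)
  have "chi2 (P \<bind> K) (Q \<bind> K) / chi2 P Q \<le> eta_chi2 M K"
    unfolding eta_chi2_def by (rule Sup_upper[OF mem])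
  also have "\<dots> \<le> ennreal \<eta>" by (rule eta)
  finally have r: "chi2 (P \<bind> K) (Q \<bind> K) / chi2 P Q \<le> ennreal \<eta>" .
  have "chi2 (P \<bind> K) (Q \<bind> K) = chi2 (P \<bind> K) (Q \<bind> K) / chi2 P Q * chi2 P Q"
    using False fin by (simp add: ennreal_divide_times)
  also have "\<dots> \<le> ennreal \<eta> * chi2 P Q" using r by (rule mult_right_mono) simp
  finally show ?thesis .
qed

lemma prop_chain:
  assumes K_kernel: "\<And>j. j < H \<Longrightarrow> K j \<in> M \<rightarrow>\<^sub>M prob_algebra M"
    and eta: "\<And>j. j < H \<Longrightarrow> eta_chi2 M (K j) \<le> ennreal \<eta>"
    and P0: "P0 \<in> space (prob_algebra M)" and P1: "P1 \<in> space (prob_algebra M)"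
    and ac: "absolutely_continuous P1 P0" and c: "chi2 P0 P1 = ennreal \<Delta>2"
  shows "t + k \<le> H \<Longrightarrow> propagate K P0 t k \<in> space (prob_algebra M) \<and> propagate K P1 t k \<in> space (prob_algebra M)
     \<and> absolutely_continuous (propagate K P1 t k) (propagate K P0 t k)
     \<and> chi2 (propagate K P0 t k) (propagate K P1 t k) \<le> ennreal \<eta> ^ k * ennreal \<Delta>2"
proof (induction k)
  case 0
  then show ?case using P0 P1 ac c by simp
next
  case (Suc k)
  then have IH: "propagate K P0 t k \<in> space (prob_algebra M)" "propagate K P1 t k \<in> space (prob_algebra M)"
     "absolutely_continuous (propagate K P1 t k) (propagate K P0 t k)"
     "chi2 (propagate K P0 t k) (propagate K P1 t k) \<le> ennreal \<eta> ^ k * ennreal \<Delta>2" by auto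
  have lt: "t + k < H" using Suc.prems by simp
  note Kk = K_kernel[OF lt]
  have fin: "chi2 (propagate K P0 t k) (propagate K P1 t k) < \<top>"
    using IH(4) by (rule le_less_trans) (simp add: ennreal_mult_eq_top_iff power_eq_top_ennreal less_top[symmetric])
  have "chi2 (propagate K P0 t (Suc k)) (propagate K P1 t (Suc k))
      \<le> ennreal \<eta> * chi2 (propagate K P0 t k) (propagate K P1 t k)"
    by simp (rule sdpi_step[OF IH(1,2,3) fin Kk eta[OF lt]])
  also have "\<dots> \<le> ennreal \<eta> * (ennreal \<eta> ^ k * ennreal \<Delta>2)"
    by (rule mult_left_mono[OF IH(4)]) simp
  finally have ch: "chi2 (propagate K P0 t (Suc k)) (propagate K P1 t (Suc k)) \<le> ennreal \<eta> ^ Suc k * ennreal \<Delta>2"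
    by (simp add: mult.assoc)
  show ?case
    using bind_in[OF IH(1) Kk] bind_in[OF IH(2) Kk] ac_bind[OF IH(1) IH(2) IH(3) Kk] ch by simp
qed

definition sch :: "nat \<Rightarrow> nat \<Rightarrow> nat \<Rightarrow> nat" where
  "sch H m i = nat \<lfloor>real i * real H / real (m + 1)\<rfloor>"

lemma sch_mono: "i \<le> j \<Longrightarrow> sch H m i \<le> sch H m j"
  unfolding sch_def
  by (intro nat_mono floor_mono divide_right_mono mult_right_mono) auto

lemma sch_0: "sch H m 0 = 0" by (simp add: sch_def)

lemma sch_last: "sch H m (m + 1) = H"
proof -
  have "real (m + 1) * real H / real (m + 1) = real H" by simp
  then show ?thesis unfolding sch_def by (metis floor_of_nat nat_int)
qed

lemma schedule_eq: "schedule H m = sch H m ` {1..m}"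
  unfolding schedule_def sch_def by auto

lemma sch_le: "i \<le> m + 1 \<Longrightarrow> sch H m i \<le> H"
  using sch_mono[of i "m+1" H m] sch_last[of H m] by simp

lemma gap_exists:
  assumes "m < H"
  shows "\<exists>i\<le>m. real H / real (m + 1) \<le> real (sch H m (Suc i)) - real (sch H m i)"
proof (rule ccontr)
  assume "\<not> ?thesis"
  then have lt: "\<And>i. i \<in> {..<m+1} \<Longrightarrow> real (sch H m (Suc i)) - real (sch H m i) < real H / real (m + 1)"
    by (metis lessThan_iff less_Suc_eq_le Suc_eq_plus1 not_le)
  have "(\<Sum>i<m+1. real (sch H m (Suc i)) - real (sch H m i)) < (\<Sum>i<m+1. real H / real (m + 1))"
    by (rule sum_strict_mono) (use lt in auto)
  also have "\<dots> = real H" by simp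
  finally have lt2: "(\<Sum>i<m+1. real (sch H m (Suc i)) - real (sch H m i)) < real H" .
  have "(\<Sum>i<m+1. real (sch H m (Suc i)) - real (sch H m i)) = real (sch H m (m+1)) - real (sch H m 0)"
    by (rule sum_lessThan_telescope)
  also have "\<dots> = real H" by (simp only: sch_0 sch_last)
  finally show False using lt2 by simp
qed

lemma next_insp_bounds:
  assumes i: "i \<le> m" and lt: "sch H m i < sch H m (Suc i)"
  shows "sch H m (Suc i) \<le> next_insp H m (sch H m i)" "next_insp H m (sch H m i) \<le> H"
    "sch H m i < next_insp H m (sch H m i)" "next_insp H m (sch H m i) \<in> schedule H m \<union> {H}"
proof -
  define U where "U = {u \<in> schedule H m \<union> {H}. sch H m i < u}"
  have HU: "H \<in> U" using lt sch_le[of "Suc i" m H] i by (auto simp: U_def)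
  have Ub: "U \<subseteq> {..H}" unfolding U_def schedule_eq using sch_le by fastforce
  then have fU: "finite U" by (rule finite_subset) simp
  have nx: "next_insp H m (sch H m i) = Min U" by (simp add: next_insp_def U_def)
  have low: "\<And>u. u \<in> U \<Longrightarrow> sch H m (Suc i) \<le> u"
  proof -
    fix u assume u: "u \<in> U"
    show "sch H m (Suc i) \<le> u"
    proof (cases "u = H")
      case True then show ?thesis using sch_le[of "Suc i" m H] i by simp
    next
      case False
      then obtain j where j: "j \<in> {1..m}" "u = sch H m j" "sch H m i < sch H m j"
        using u by (auto simp: U_def schedule_eq)
      have "i < j" using j(3) sch_mono[of j i H m] by (metis not_le)
      then show ?thesis using j sch_mono[of "Suc i" j H m] by simp
    qed
  qed
  show "sch H m (Suc i) \<le> next_insp H m (sch H m i)"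
    unfolding nx using HU low by (subst Min_ge_iff[OF fU]) auto
  show "next_insp H m (sch H m i) \<le> H" unfolding nx using fU HU by (rule Min_le)
  show "sch H m i < next_insp H m (sch H m i)"
  proof -
    have "Min U \<in> U" using Min_in[OF fU] HU by auto
    then show ?thesis unfolding nx by (simp add: U_def)
  qed
  show "next_insp H m (sch H m i) \<in> schedule H m \<union> {H}"
  proof -
    have "Min U \<in> U" using Min_in[OF fU] HU by auto
    then show ?thesis unfolding nx by (simp add: U_def)
  qed
qed

theorem corollary6:
  fixes M :: "'a measure" and N :: "'b measure"
    and K :: "nat \<Rightarrow> 'a \<Rightarrow> 'a measure" and g :: "nat \<Rightarrow> 'a \<Rightarrow> 'b"
    and H m :: nat and \<eta> \<Delta>2 \<epsilon> :: real
  assumes K_kernel: "\<And>j. j < H \<Longrightarrow> K j \<in> M \<rightarrow>\<^sub>M prob_algebra M"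
    and eta: "\<And>j. j < H \<Longrightarrow> eta_chi2 M (K j) \<le> ennreal \<eta>"
    and eta_lt: "\<eta> < 1"
    and m: "m < H"
    and g_meas: "\<And>u. u \<in> schedule H m \<union> {H} \<Longrightarrow> g u \<in> M \<rightarrow>\<^sub>M N"
    and Delta: "0 < \<Delta>2"
    and eps: "0 < \<epsilon>" "\<epsilon> < 1/2"
  shows "\<exists>t. t < H \<and>
    (\<forall>P0 P1. P0 \<in> space (prob_algebra M) \<longrightarrow> P1 \<in> space (prob_algebra M) \<longrightarrow>
       absolutely_continuous P1 P0 \<longrightarrow> chi2 P0 P1 = ennreal \<Delta>2 \<longrightarrow>
       (\<forall>n psi. psi \<in> PiM {..<n} (\<lambda>_. N) \<rightarrow>\<^sub>M count_space UNIV \<longrightarrow>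
          total_error n
            (distr (propagate K P0 t (next_insp H m t - t)) N (g (next_insp H m t)))
            (distr (propagate K P1 t (next_insp H m t - t)) N (g (next_insp H m t))) psi \<le> \<epsilon>
          \<longrightarrow> real n * \<eta> ^ nat \<lceil>real H / real (m + 1)\<rceil> * \<Delta>2 \<ge> (1 - \<epsilon>)\<^sup>2))"
proof -
  obtain i where i: "i \<le> m"
    and gapr: "real H / real (m + 1) \<le> real (sch H m (Suc i)) - real (sch H m i)"
    using gap_exists[OF m] by blast
  define k where "k = nat \<lceil>real H / real (m + 1)\<rceil>"
  have Hpos: "0 < real H / real (m + 1)" using m by simp
  have "real (sch H m i) < real (sch H m (Suc i))" using gapr Hpos by linarith
  then have ltS: "sch H m i < sch H m (Suc i)" by simp
  have "\<lceil>real H / real (m + 1)\<rceil> \<le> int (sch H m (Suc i) - sch H m i)"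
    using gapr ltS by (simp add: ceiling_le_iff of_nat_diff)
  then have kgap: "k \<le> sch H m (Suc i) - sch H m i" unfolding k_def by (simp only: nat_le_iff)
  define t where "t = sch H m i"
  define u where "u = next_insp H m t"
  note nb = next_insp_bounds[OF i ltS, folded t_def, folded u_def]
  define d where "d = u - t"
  have tH: "t < H" using nb by simp
  have kd: "k \<le> d" using nb kgap unfolding d_def t_def by simp
  have td: "t + d \<le> H" using nb unfolding d_def by simp
  have d1: "1 \<le> d" using nb unfolding d_def by simp
  show ?thesis
  proof (intro exI[of _ t] conjI allI impI tH)
    fix P0 P1 :: "'a measure" and n :: nat and psi :: "(nat \<Rightarrow> 'b) \<Rightarrow> bool"
    assume P0: "P0 \<in> space (prob_algebra M)" and P1: "P1 \<in> space (prob_algebra M)"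
      and ac: "absolutely_continuous P1 P0" and chi: "chi2 P0 P1 = ennreal \<Delta>2"
      and psi: "psi \<in> PiM {..<n} (\<lambda>_. N) \<rightarrow>\<^sub>M count_space UNIV"
      and err0: "total_error n
            (distr (propagate K P0 t (next_insp H m t - t)) N (g (next_insp H m t)))
            (distr (propagate K P1 t (next_insp H m t - t)) N (g (next_insp H m t))) psi \<le> \<epsilon>"
    have err: "total_error n (distr (propagate K P0 t d) N (g u)) (distr (propagate K P1 t d) N (g u)) psi \<le> \<epsilon>"
      using err0 unfolding d_def u_def .
    have ch: "propagate K P0 t d \<in> space (prob_algebra M) \<and> propagate K P1 t d \<in> space (prob_algebra M)
     \<and> absolutely_continuous (propagate K P1 t d) (propagate K P0 t d)
     \<and> chi2 (propagate K P0 t d) (propagate K P1 t d) \<le> ennreal \<eta> ^ d * ennreal \<Delta>2"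
      by (rule prop_chain[OF K_kernel eta P0 P1 ac chi td])
    define c where "c = enn2real (chi2 (propagate K P0 t d) (propagate K P1 t d))"
    have fin: "chi2 (propagate K P0 t d) (propagate K P1 t d) \<noteq> \<top>"
      using ch by (metis ennreal_mult_eq_top_iff ennreal_neq_top power_eq_top_ennreal top.extremum_uniqueI)
    have cc: "chi2 (propagate K P0 t d) (propagate K P1 t d) = ennreal c"
      using fin unfolding c_def by (simp add: ennreal_enn2real_if)
    have c0: "0 \<le> c" by (simp add: c_def)
    have gm: "g u \<in> M \<rightarrow>\<^sub>M N" using g_meas nb by simp
    have tb: "4 * (1 - \<epsilon>)\<^sup>2 \<le> (1 + c) ^ n - 1"
      using ch by (intro test_bound_g[OF _ _ _ cc c0 gm psi err]) (use eps in auto)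
    have fa: "(1 - \<epsilon>)\<^sup>2 \<le> real n * c"
      by (rule final_arith[OF tb c0]) (use eps in auto)
    show "real n * \<eta> ^ nat \<lceil>real H / real (m + 1)\<rceil> * \<Delta>2 \<ge> (1 - \<epsilon>)\<^sup>2"
    proof (cases "0 \<le> \<eta>")
      case False
      then have "ennreal \<eta> ^ d = 0" using d1 by (simp add: ennreal_eq_0_iff power_0_left)
      then have "ennreal c \<le> 0 * ennreal \<Delta>2" using ch cc by metis
      then have "ennreal c \<le> 0" by simp
      then have "c = 0" using c0 by simp
      then show ?thesis using fa eps by simp
    next
      case True
      have "ennreal c \<le> ennreal (\<eta> ^ d * \<Delta>2)"
        using ch cc True Delta by (simp add: ennreal_power ennreal_mult)
      then have "c \<le> \<eta> ^ d * \<Delta>2" using True Delta by (simp add: ennreal_le_iff)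
      also have "\<eta> ^ d \<le> \<eta> ^ k" using True eta_lt kd by (intro power_decreasing) auto
      then have "\<eta> ^ d * \<Delta>2 \<le> \<eta> ^ k * \<Delta>2" using Delta by simp
      finally have "real n * c \<le> real n * (\<eta> ^ k * \<Delta>2)" by (simp add: mult_left_mono)
      then show ?thesis using fa unfolding k_def by (simp add: mult.assoc)
    qed
  qed
qed


end
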